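(* Let $h,h_*$ be functions of $x$, let $\epsilon\ge0$, and let $f_h$ be a test function with $\|f_h-T(h_*-h)\|_2\le\epsilon$ and $\|f_h\|_2>0$. Let $\Psi(h,f)=\mathbb E[(y-h(x))f(z)]$. Then $$\frac1{\|f_h\|_2}\big(\Psi(h,f_h)-\Psi(h_*,f_h)\big)\ge\|T(h-h_* )\|_2-2\epsilon.$$
   Context: $(y,x,z)$ is a random vector; $(Th)(z)=\mathbb E[h(x)\mid z]$ and $\|\cdot\|_2$ is the population $L^2$ norm. *)

theory Defs
  imports "HOL-Probability.Probability"
begin

definition L2norm :: "'a measure \<Rightarrow> ('a \<Rightarrow> real) \<Rightarrow> real" where
  "L2norm M g = sqrt (\<integral>\<omega>. (g \<omega>)\<^sup>2 \<partial>M)"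

text \<open>The operator T: (T h)(z) = E[h(x) | z], realised as the conditional
  expectation of h(x) with respect to the sigma-algebra generated by z
  (z takes values in the measurable space N).\<close>
definition Top :: "'a measure \<Rightarrow> ('a \<Rightarrow> 'b) \<Rightarrow> ('a \<Rightarrow> 'c) \<Rightarrow> 'c measure \<Rightarrow> ('b \<Rightarrow> real) \<Rightarrow> ('a \<Rightarrow> real)" where
  "Top M x z N h = real_cond_exp M (vimage_algebra (space M) z N) (\<lambda>\<omega>. h (x \<omega>))"

definition Psi :: "'a measure \<Rightarrow> ('a \<Rightarrow> real) \<Rightarrow> ('a \<Rightarrow> 'b) \<Rightarrow> ('a \<Rightarrow> 'c) \<Rightarrow> ('b \<Rightarrow> real) \<Rightarrow> ('c \<Rightarrow> real) \<Rightarrow> real" where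
  "Psi M y x z h f = (\<integral>\<omega>. (y \<omega> - h (x \<omega>)) * f (z \<omega>) \<partial>M)"

end

theory Submission
  imports Defs
begin

lemma quad_disc:
  fixes A B S :: real
  assumes "\<And>t. 0 \<le> t^2 * A - 2 * t * S + B" and "A \<ge> 0"
  shows "S^2 \<le> A * B"
proof (cases "A = 0")
  case True
  show ?thesis
  proof (rule ccontr)
    assume "\<not> ?thesis"
    hence "S \<noteq> 0" using True by simp
    have "0 \<le> ((B+1)/(2*S))^2 * A - 2 * ((B+1)/(2*S)) * S + B" by (rule assms(1))
    also have "\<dots> = -1" using True \<open>S \<noteq> 0\<close> by (simp add: field_simps)
    finally show False by simp
  qed
next
  case False
  hence Ap: "A > 0" using assms(2) by simp
  have "0 \<le> (S/A)^2 * A - 2 * (S/A) * S + B" by (rule assms(1))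
  also have "\<dots> = B - S^2 / A" using Ap by (simp add: field_simps power2_eq_square)
  finally show ?thesis using Ap by (simp add: field_simps)
qed

lemma prod_int:
  fixes a b :: "'a \<Rightarrow> real"
  assumes [measurable]: "a \<in> borel_measurable M" "b \<in> borel_measurable M"
    and "integrable M (\<lambda>w. (a w)^2)" "integrable M (\<lambda>w. (b w)^2)"
  shows "integrable M (\<lambda>w. a w * b w)"
proof (rule Bochner_Integration.integrable_bound[of _ "\<lambda>w. (a w)^2 + (b w)^2"])
  show "integrable M (\<lambda>w. (a w)^2 + (b w)^2)" using assms by auto
  show "AE w in M. norm (a w * b w) \<le> norm ((a w)^2 + (b w)^2)"
  proof (rule AE_I2)
    fix w
    have "\<bar>a w * b w\<bar> \<le> (a w)^2 + (b w)^2"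
    proof -
      have "0 \<le> (\<bar>a w\<bar> - \<bar>b w\<bar>)^2" by simp
      hence "2 * (\<bar>a w\<bar> * \<bar>b w\<bar>) \<le> (a w)^2 + (b w)^2"
        by (simp add: power2_diff)
      moreover have "0 \<le> \<bar>a w\<bar> * \<bar>b w\<bar>" by simp
      ultimately show ?thesis by (simp only: abs_mult)
    qed
    thus "norm (a w * b w) \<le> norm ((a w)^2 + (b w)^2)" by simp
  qed
qed simp

lemma diff_sq_int:
  fixes a b :: "'a \<Rightarrow> real"
  assumes [measurable]: "a \<in> borel_measurable M" "b \<in> borel_measurable M"
    and "integrable M (\<lambda>w. (a w)^2)" "integrable M (\<lambda>w. (b w)^2)"
  shows "integrable M (\<lambda>w. (a w - b w)^2)"
proof -
  have "integrable M (\<lambda>w. a w * b w)" by (rule prod_int) (use assms in auto)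
  hence "integrable M (\<lambda>w. (a w)^2 - 2 * (a w * b w) + (b w)^2)" using assms by auto
  thus ?thesis by (simp add: power2_diff algebra_simps)
qed

lemma CS:
  fixes a b :: "'a \<Rightarrow> real"
  assumes [measurable]: "a \<in> borel_measurable M" "b \<in> borel_measurable M"
    and ia: "integrable M (\<lambda>w. (a w)^2)" and ib: "integrable M (\<lambda>w. (b w)^2)"
  shows "\<bar>\<integral>w. a w * b w \<partial>M\<bar> \<le> L2norm M a * L2norm M b"
proof -
  have iab: "integrable M (\<lambda>w. a w * b w)" by (rule prod_int) (use assms in auto)
  let ?A = "\<integral>w. (a w)^2 \<partial>M" and ?B = "\<integral>w. (b w)^2 \<partial>M" and ?S = "\<integral>w. a w * b w \<partial>M"
  have "?S^2 \<le> ?A * ?B"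
  proof (rule quad_disc)
    fix t :: real
    have "0 \<le> (\<integral>w. (t * a w - b w)^2 \<partial>M)" by simp
    also have "\<dots> = (\<integral>w. t^2 * (a w)^2 - 2 * t * (a w * b w) + (b w)^2 \<partial>M)"
      by (rule Bochner_Integration.integral_cong) (auto simp: power2_diff power_mult_distrib)
    also have "\<dots> = t^2 * ?A - 2 * t * ?S + ?B"
      using ia ib iab by simp
    finally show "0 \<le> t^2 * ?A - 2 * t * ?S + ?B" .
  qed simp
  hence "sqrt (?S^2) \<le> sqrt (?A * ?B)" by (rule real_sqrt_le_mono)
  thus ?thesis unfolding L2norm_def by (simp only: real_sqrt_abs real_sqrt_mult)
qed

theorem lemma4:
  fixes M :: "'a measure" and X :: "'b measure" and N :: "'c measure"
    and y :: "'a \<Rightarrow> real" and x :: "'a \<Rightarrow> 'b" and z :: "'a \<Rightarrow> 'c"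
    and h hs :: "'b \<Rightarrow> real" and fh :: "'c \<Rightarrow> real" and \<epsilon> :: real
  assumes "prob_space M"
    and "x \<in> measurable M X" and "z \<in> measurable M N"
    and "y \<in> borel_measurable M" and "integrable M (\<lambda>\<omega>. (y \<omega>)\<^sup>2)"
    and "h \<in> borel_measurable X" and "integrable M (\<lambda>\<omega>. (h (x \<omega>))\<^sup>2)"
    and "hs \<in> borel_measurable X" and "integrable M (\<lambda>\<omega>. (hs (x \<omega>))\<^sup>2)"
    and "fh \<in> borel_measurable N" and "integrable M (\<lambda>\<omega>. (fh (z \<omega>))\<^sup>2)"
    and "\<epsilon> \<ge> 0"
    and "L2norm M (\<lambda>\<omega>. fh (z \<omega>) - Top M x z N (\<lambda>v. hs v - h v) \<omega>) \<le> \<epsilon>"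
    and "L2norm M (\<lambda>\<omega>. fh (z \<omega>)) > 0"
  shows "(Psi M y x z h fh - Psi M y x z hs fh) / L2norm M (\<lambda>\<omega>. fh (z \<omega>))
           \<ge> L2norm M (Top M x z N (\<lambda>v. h v - hs v)) - 2 * \<epsilon>"
proof -
  note [measurable] = assms(2,3,4,6,8,10)
  interpret P: prob_space M by fact
  define Fa where "Fa = vimage_algebra (space M) z N"
  have sub: "subalgebra M Fa"
    unfolding subalgebra_def Fa_def
    using sets_image_in_sets[OF refl assms(3)] by auto
  interpret S: finite_measure_subalgebra M Fa
    by unfold_locales (rule sub)
  define f where "f w = fh (z w)" for w
  define g where "g w = hs (x w) - h (x w)" for w
  define G where "G = real_cond_exp M Fa g"
  have zF: "z \<in> measurable Fa N"
    unfolding Fa_def by (rule measurable_vimage_algebra1) (use assms(3) in \<open>auto simp: measurable_def\<close>)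
  have fF: "f \<in> borel_measurable Fa"
    unfolding f_def using measurable_comp[OF zF assms(10)] by (simp add: comp_def)
  have fM [measurable]: "f \<in> borel_measurable M" unfolding f_def by measurable
  have gM [measurable]: "g \<in> borel_measurable M" unfolding g_def by measurable
  have GM [measurable]: "G \<in> borel_measurable M" unfolding G_def by simp
  have if2: "integrable M (\<lambda>w. (f w)^2)" unfolding f_def by fact
  have ig2: "integrable M (\<lambda>w. (g w)^2)" unfolding g_def
    by (rule diff_sq_int) (use assms in auto)
  have ig: "integrable M g" by (rule P.square_integrable_imp_integrable[OF gM ig2])
  have iG2: "integrable M (\<lambda>w. (G w)^2)" unfolding G_def
    by (rule S.integrable_convex_cond_exp[where I=UNIV]) (use ig ig2 convex_power2 in auto)
  have ifg: "integrable M (\<lambda>w. f w * g w)" by (rule prod_int) (use if2 ig2 in auto)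
  have key: "(\<integral>w. f w * G w \<partial>M) = (\<integral>w. f w * g w \<partial>M)"
    unfolding G_def by (rule S.real_cond_exp_intg(2)[OF ifg fF gM])
  have Tdef: "Top M x z N (\<lambda>v. hs v - h v) = G"
    unfolding Top_def G_def Fa_def g_def by simp
  have iyh: "integrable M (\<lambda>w. (y w - h (x w)) * f w)"
    by (rule prod_int, measurable) (use if2 diff_sq_int[of y M "\<lambda>w. h (x w)"] assms in auto)
  have iyhs: "integrable M (\<lambda>w. (y w - hs (x w)) * f w)"
    by (rule prod_int, measurable) (use if2 diff_sq_int[of y M "\<lambda>w. hs (x w)"] assms in auto)
  have Pdiff: "Psi M y x z h fh - Psi M y x z hs fh = (\<integral>w. f w * g w \<partial>M)"
  proof -
    have "Psi M y x z h fh - Psi M y x z hs fh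
        = (\<integral>w. (y w - h (x w)) * f w - (y w - hs (x w)) * f w \<partial>M)"
      unfolding Psi_def f_def[symmetric] using iyh iyhs by simp
    also have "\<dots> = (\<integral>w. f w * g w \<partial>M)"
      by (rule Bochner_Integration.integral_cong) (auto simp: g_def algebra_simps)
    finally show ?thesis .
  qed
  have Gneg: "AE w in M. real_cond_exp M Fa (\<lambda>w. -1 * g w) w = -1 * G w"
    unfolding G_def by (rule S.real_cond_exp_cmult[OF ig])
  have eqfun: "(\<lambda>w. h (x w) - hs (x w)) = (\<lambda>w. -1 * g w)" by (auto simp: g_def)
  have TB: "L2norm M (Top M x z N (\<lambda>v. h v - hs v)) = L2norm M G"
  proof -
    have "Top M x z N (\<lambda>v. h v - hs v) = real_cond_exp M Fa (\<lambda>w. -1 * g w)"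
      unfolding Top_def Fa_def[symmetric] using eqfun by simp
    moreover have "(\<integral>w. (real_cond_exp M Fa (\<lambda>w. -1 * g w) w)^2 \<partial>M) = (\<integral>w. (G w)^2 \<partial>M)"
      by (rule integral_cong_AE) (use Gneg in auto)
    ultimately show ?thesis unfolding L2norm_def by simp
  qed
  define A where "A = L2norm M f"
  define B where "B = L2norm M G"
  define D where "D = L2norm M (\<lambda>w. f w - G w)"
  have D_le: "D \<le> \<epsilon>" using assms(13) unfolding D_def f_def Tdef .
  have Apos: "A > 0" using assms(14) unfolding A_def f_def .
  have A0: "A \<ge> 0" "B \<ge> 0" "D \<ge> 0" unfolding A_def B_def D_def L2norm_def by auto
  have iD2: "integrable M (\<lambda>w. (f w - G w)^2)" by (rule diff_sq_int) (use if2 iG2 in auto)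
  have ifD: "integrable M (\<lambda>w. f w * (f w - G w))" by (rule prod_int) (use if2 iD2 in auto)
  have CS1: "\<bar>\<integral>w. f w * (f w - G w) \<partial>M\<bar> \<le> A * D"
    unfolding A_def D_def by (rule CS) (use if2 iD2 in auto)
  have A2: "(\<integral>w. (f w)^2 \<partial>M) = A^2" unfolding A_def L2norm_def by simp
  have B2: "(\<integral>w. (G w)^2 \<partial>M) = B^2" unfolding B_def L2norm_def by simp
  have D2: "(\<integral>w. (f w - G w)^2 \<partial>M) = D^2" unfolding D_def L2norm_def by simp
  have E: "(\<integral>w. f w * G w \<partial>M) = A^2 - (\<integral>w. f w * (f w - G w) \<partial>M)"
  proof -
    have "(\<integral>w. f w * G w \<partial>M) = (\<integral>w. (f w)^2 - f w * (f w - G w) \<partial>M)"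
      by (rule Bochner_Integration.integral_cong) (auto simp: algebra_simps power2_eq_square)
    also have "\<dots> = A^2 - (\<integral>w. f w * (f w - G w) \<partial>M)" using if2 ifD A2 by simp
    finally show ?thesis .
  qed
  have Bsq: "B^2 = A^2 - 2 * (\<integral>w. f w * (f w - G w) \<partial>M) + D^2"
  proof -
    have "B^2 = (\<integral>w. (f w)^2 - 2 * (f w * (f w - G w)) + (f w - G w)^2 \<partial>M)"
      unfolding B2[symmetric]
      by (rule Bochner_Integration.integral_cong) (auto simp: algebra_simps power2_eq_square)
    also have "\<dots> = A^2 - 2 * (\<integral>w. f w * (f w - G w) \<partial>M) + D^2" using if2 ifD iD2 A2 D2 by simp
    finally show ?thesis .
  qed
  have "B^2 \<le> (A + D)^2" using Bsq CS1 by (simp add: power2_sum abs_le_iff)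
  hence BAD: "B \<le> A + D" using A0 by (meson power2_le_imp_le add_nonneg_nonneg)
  have "(\<integral>w. f w * G w \<partial>M) \<ge> A * (A - D)" using E CS1 by (simp add: power2_eq_square algebra_simps abs_le_iff)
  hence "(\<integral>w. f w * G w \<partial>M) / A \<ge> A - D" using Apos by (simp add: field_simps)
  hence "(\<integral>w. f w * G w \<partial>M) / A \<ge> B - 2 * \<epsilon>" using BAD D_le by linarith
  thus ?thesis unfolding Pdiff TB B_def[symmetric] using key by (simp add: A_def f_def[abs_def])
qed

end
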